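(* Let $q$ be a prime power, $h\geq 2$, and let $\mathcal{L}_1,\mathcal{L}_2$ be two disjoint blocking sets of $\mathrm{PG}(2,q^h)$, each projectively equivalent to $\{(x:\mathrm{Tr}_{q^h/q}(x):y): x\in\mathbb{F}_{q^h},\ y\in\mathbb{F}_q,\ (x,y)\neq(0,0)\}$. Then each point of $\mathcal{L}_1\cup\mathcal{L}_2$ is incident with at least $q^h-q^{h-1}-q^{h-2}$ lines meeting $\mathcal{L}_1\cup\mathcal{L}_2$ in exactly $2$ points. In particular, $\mathcal{L}_1\cup\mathcal{L}_2$ is a minimal double blocking set.
   Context: $\mathrm{Tr}_{q^h/q}(x)=x+x^q+\dots+x^{q^{h-1}}$. A $t$-fold blocking set is a point set meeting every line in at least $t$ points (double = 2-fold); it is minimal if it contains no smaller $t$-fold blocking set. *)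

theory Defs
  imports "HOL-Analysis.Analysis" "HOL-Computational_Algebra.Primes"
begin

definition pg_point :: "'a::field ^ 3 \<Rightarrow> ('a ^ 3) set" where
  "pg_point v = {c *s v | c. c \<noteq> 0}"

definition pg_points :: "('a::field ^ 3) set set" where
  "pg_points = {pg_point v | v. v \<noteq> 0}"

definition pg_line :: "'a::field ^ 3 \<Rightarrow> ('a ^ 3) set set" where
  "pg_line a = {pg_point v | v. v \<noteq> 0 \<and> (\<Sum>i\<in>UNIV. a $ i * v $ i) = 0}"

definition pg_lines :: "('a::field ^ 3) set set set" where
  "pg_lines = {pg_line a | a. a \<noteq> 0}"

definition t_fold_blocking_set :: "nat \<Rightarrow> ('a::field ^ 3) set set \<Rightarrow> bool" where
  "t_fold_blocking_set t B \<longleftrightarrow> B \<subseteq> pg_points \<and> (\<forall>l\<in>pg_lines. card (l \<inter> B) \<ge> t)"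

definition blocking_set :: "('a::field ^ 3) set set \<Rightarrow> bool" where
  "blocking_set B \<longleftrightarrow> t_fold_blocking_set 1 B"

definition double_blocking_set :: "('a::field ^ 3) set set \<Rightarrow> bool" where
  "double_blocking_set B \<longleftrightarrow> t_fold_blocking_set 2 B"

definition minimal_double_blocking_set :: "('a::field ^ 3) set set \<Rightarrow> bool" where
  "minimal_double_blocking_set B \<longleftrightarrow>
     double_blocking_set B \<and> (\<forall>B'. B' \<subset> B \<longrightarrow> \<not> double_blocking_set B')"

definition projectivity_image :: "'a::field ^ 3 ^ 3 \<Rightarrow> ('a ^ 3) set set \<Rightarrow> ('a ^ 3) set set" where
  "projectivity_image A S = (\<lambda>P. (\<lambda>v. A *v v) ` P) ` S"

definition proj_equivalent :: "('a::field ^ 3) set set \<Rightarrow> ('a ^ 3) set set \<Rightarrow> bool" where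
  "proj_equivalent S T \<longleftrightarrow> (\<exists>A::'a^3^3. invertible A \<and> projectivity_image A T = S)"

definition rel_trace :: "nat \<Rightarrow> nat \<Rightarrow> 'a::field \<Rightarrow> 'a" where
  "rel_trace q h x = (\<Sum>i<h. x ^ (q ^ i))"

text \<open>The set {(x : Tr(x) : y) : x in F_{q^h}, y in F_q, (x,y) \<noteq> (0,0)}; the subfield F_q
of F_{q^h} is {y. y^q = y}.\<close>

definition trace_blocking_set :: "nat \<Rightarrow> nat \<Rightarrow> ('a::field ^ 3) set set" where
  "trace_blocking_set q h =
     {pg_point (vector [x, rel_trace q h x, y]) | x y. y ^ q = y \<and> (x, y) \<noteq> (0, 0)}"

definition prime_power :: "nat \<Rightarrow> bool" where
  "prime_power q \<longleftrightarrow> (\<exists>p k. prime p \<and> k \<ge> 1 \<and> q = p ^ k)"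

end

theory Submission
  imports Defs
begin

definition dt :: "'a::field^3 \<Rightarrow> 'a^3 \<Rightarrow> 'a" where
  "dt a v = (\<Sum>i\<in>UNIV. a$i * v$i)"

lemma dt_eq: "dt a v = a$1 *  v$1 + a$2 *  v$2 + a$3 *  v$3"
  by (simp add: dt_def sum_3)

lemma pg_line_dt: "pg_line a = {pg_point v | v. v \<noteq> 0 \<and> dt a v = 0}"
  by (simp add: pg_line_def dt_def)

lemma dt_scale: "dt a (c *s v) = c * dt a v"
  by (simp add: dt_eq algebra_simps)
lemma dt_scale1: "dt (c *s a) v = c * dt a v"
  by (simp add: dt_eq algebra_simps)
lemma dt_add: "dt a (u + v) = dt a u + dt a v"
  by (simp add: dt_eq algebra_simps)
lemma dt_diff: "dt a (u - v) = dt a u - dt a v"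
  by (simp add: dt_eq algebra_simps)
lemma dt_vec: "dt (vector [a1,a2,a3]) (vector [b1,b2,b3]) = a1*b1+a2*b2+a3*b3"
  by (simp add: dt_eq)

lemma vec3_eq: "(u::'a^3) = v \<longleftrightarrow> u$1 = v$1 \<and> u$2 = v$2 \<and> u$3 = v$3"
  by (simp add: vec_eq_iff forall_3)

lemma vec3_zero: "(u::'a::zero^3) = 0 \<longleftrightarrow> u$1 = 0 \<and> u$2 = 0 \<and> u$3 = 0"
  by (simp add: vec_eq_iff forall_3)

lemma pp_self: "v \<in> pg_point (v::'a::field^3)"
  unfolding pg_point_def by (rule CollectI, rule exI[of _ 1]) simp

lemma pp_scale: assumes c: "(c::'a::field) \<noteq> 0" shows "pg_point (c *s v) = pg_point v"
proof -
  have "{d *s (c *s v) | d. d \<noteq> 0} = {d *s v | d. d \<noteq> 0}"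
  proof (intro equalityI subsetI)
    fix x
    assume "x \<in> {d *s (c *s v) |d. d \<noteq> 0}"
    then obtain d where "d \<noteq> 0" "x = d *s (c *s v)" by auto
    thus "x \<in> {d *s v |d. d \<noteq> 0}" using c by (auto intro!: exI[of _ "d*c"] simp: vector_smult_assoc)
  next
    fix x
    assume "x \<in> {d *s v |d. d \<noteq> 0}"
    then obtain d where "d \<noteq> 0" "x = d *s v" by auto
    thus "x \<in> {d *s (c *s v) |d. d \<noteq> 0}" using c by (auto intro!: exI[of _ "d/c"] simp: vector_smult_assoc)
  qed
  thus ?thesis by (simp add: pg_point_def)
qed

lemma pp_eq_iff:
  assumes "u \<noteq> 0"
  shows "pg_point u = pg_point (v::'a::field^3) \<longleftrightarrow> (\<exists>c. c \<noteq> 0 \<and> u = c *s v)"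
proof
  assume "pg_point u = pg_point v"
  then have "u \<in> pg_point v" using pp_self by metis
  thus "\<exists>c. c \<noteq> 0 \<and> u = c *s v" unfolding pg_point_def by auto
next
  assume "\<exists>c. c \<noteq> 0 \<and> u = c *s v"
  thus "pg_point u = pg_point v" using pp_scale by auto
qed

lemma pp_mem_line: "v \<noteq> 0 \<Longrightarrow> pg_point v \<in> pg_line a \<longleftrightarrow> dt a v = 0"
proof
  assume v: "v \<noteq> 0" and "pg_point v \<in> pg_line a"
  then obtain w where w: "w \<noteq> 0" "dt a w = 0" "pg_point v = pg_point w"
    unfolding pg_line_dt by auto
  then obtain c where "v = c *s w" using pp_eq_iff[OF v] by auto
  thus "dt a v = 0" using w by (simp add: dt_scale)
qed (auto simp: pg_line_dt)

lemma pg_pointsE: assumes "P \<in> pg_points" obtains v where "v \<noteq> 0" "P = pg_point v"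
  using assms unfolding pg_points_def by auto

lemma pg_linesE: assumes "l \<in> pg_lines" obtains a where "a \<noteq> 0" "l = pg_line a"
  using assms unfolding pg_lines_def by auto

lemma pp_in_points: "v \<noteq> 0 \<Longrightarrow> pg_point v \<in> pg_points"
  unfolding pg_points_def by auto

lemma line_in_lines: "a \<noteq> 0 \<Longrightarrow> pg_line a \<in> pg_lines"
  unfolding pg_lines_def by auto

lemma line_sub_points: "pg_line a \<subseteq> pg_points"
  unfolding pg_line_def pg_points_def by auto

lemma lines_sub_points: "l \<in> pg_lines \<Longrightarrow> l \<subseteq> pg_points"
  using line_sub_points by (auto elim: pg_linesE)

lemma pg_line_scale: "(k::'a::field) \<noteq> 0 \<Longrightarrow> pg_line (k *s a) = pg_line a"
  unfolding pg_line_dt by (simp add: dt_scale1)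

definition cross3 :: "'a::field^3 \<Rightarrow> 'a^3 \<Rightarrow> 'a^3" where
  "cross3 u v = vector [u$2* v$3 - u$3* v$2, u$3* v$1 - u$1* v$3, u$1* v$2 - u$2* v$1]"

lemma dt_cross1: "dt u (cross3 u v) = 0"
  by (simp add: dt_eq cross3_def algebra_simps)
lemma dt_cross2: "dt v (cross3 u v) = 0"
  by (simp add: dt_eq cross3_def algebra_simps)
lemma dt_comm: "dt u v = dt v u"
  by (simp add: dt_eq algebra_simps)

lemma cross3_zero:
  assumes "cross3 u v = 0" "u \<noteq> 0"
  shows "\<exists>c. v = c *s (u::'a::field^3)"
proof -
  have e: "u$2* v$3 = u$3* v$2" "u$3* v$1 = u$1* v$3" "u$1* v$2 = u$2* v$1"
    using assms(1) by (simp_all add: cross3_def vec3_zero)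
  consider "u$1 \<noteq> 0" | "u$2 \<noteq> 0" | "u$3 \<noteq> 0" using assms(2) vec3_zero by blast
  then show ?thesis
  proof cases
    case 1
    show ?thesis
      by (rule exI[of _ "v$1/u$1"]) (use 1 e in \<open>auto simp: vec3_eq field_simps\<close>)
  next
    case 2
    show ?thesis
      by (rule exI[of _ "v$2/u$2"]) (use 2 e in \<open>auto simp: vec3_eq field_simps\<close>)
  next
    case 3
    show ?thesis
      by (rule exI[of _ "v$3/u$3"]) (use 3 e in \<open>auto simp: vec3_eq field_simps\<close>)
  qed
qed

lemma cross3_bac: "cross3 a (cross3 u v) = (dt a v) *s u - (dt a u) *s v"
  by (simp add: vec3_eq cross3_def dt_eq algebra_simps)

lemma cross3_anti: "cross3 u v = - cross3 v u"
  by (simp add: vec3_eq cross3_def algebra_simps)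

lemma cross3_nz:
  assumes "u \<noteq> 0" "v \<noteq> 0" "pg_point u \<noteq> pg_point (v::'a::field^3)"
  shows "cross3 u v \<noteq> 0"
proof
  assume "cross3 u v = 0"
  then obtain c where c: "v = c *s u" using cross3_zero assms(1) by blast
  then have "c \<noteq> 0" using assms(2) by auto
  thus False using assms(3) c pp_scale by metis
qed

lemma line_exists2:
  assumes "P \<in> pg_points" "Q \<in> pg_points" "P \<noteq> Q"
  shows "\<exists>l\<in>pg_lines. P \<in> l \<and> (Q::('a::field^3) set) \<in> l"
proof -
  obtain u v where u: "u \<noteq> 0" "P = pg_point u" and v: "v \<noteq> 0" "Q = pg_point v"
    using assms by (meson pg_pointsE)
  have "cross3 u v \<noteq> 0" using cross3_nz u v assms(3) by blast
  thus ?thesis using u v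
    by (intro bexI[of _ "pg_line (cross3 u v)"])
       (auto simp: pp_mem_line dt_cross1 dt_cross2 line_in_lines dt_comm[of "cross3 u v"])
qed

lemma line_unique:
  assumes "l \<in> pg_lines" "m \<in> pg_lines" "P \<in> l" "P \<in> m" "Q \<in> l" "Q \<in> m" "P \<noteq> (Q::('a::field^3) set)"
  shows "l = m"
proof -
  obtain a where a: "a \<noteq> 0" "l = pg_line a" using assms(1) by (rule pg_linesE)
  obtain b where b: "b \<noteq> 0" "m = pg_line b" using assms(2) by (rule pg_linesE)
  obtain u where u: "u \<noteq> 0" "P = pg_point u" using assms(3) a line_sub_points by (meson pg_pointsE subsetD)
  obtain v where v: "v \<noteq> 0" "Q = pg_point v" using assms(5) a line_sub_points by (meson pg_pointsE subsetD)
  have c: "cross3 u v \<noteq> 0" using cross3_nz u v assms(7) by blast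
  have au: "dt a u = 0" "dt a v = 0" "dt b u = 0" "dt b v = 0"
    using assms a b u v pp_mem_line by auto
  have "cross3 a (cross3 u v) = 0" "cross3 b (cross3 u v) = 0"
    using cross3_bac[of a u v] cross3_bac[of b u v] au by simp_all
  then have z: "cross3 (cross3 u v) a = 0" "cross3 (cross3 u v) b = 0"
    using cross3_anti[of "cross3 u v" a] cross3_anti[of "cross3 u v" b] by simp_all
  obtain k where k: "a = k *s cross3 u v" using cross3_zero[OF z(1) c] by blast
  obtain k' where k': "b = k' *s cross3 u v" using cross3_zero[OF z(2) c] by blast
  have "k \<noteq> 0" "k' \<noteq> 0" using k k' a b by auto
  then have "l = pg_line (cross3 u v)" "m = pg_line (cross3 u v)"
    using k k' a b pg_line_scale by simp_all
  thus ?thesis by simp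
qed

lemma finite_sets3: "finite (X :: ('a::finite^3) set set)"
  by simp


lemma exists_e: "(c::'a::field^3) \<noteq> 0 \<Longrightarrow> \<exists>e. dt e c \<noteq> 0"
proof -
  assume "c \<noteq> 0"
  then consider "c$1 \<noteq> 0" | "c$2 \<noteq> 0" | "c$3 \<noteq> 0" using vec3_zero by blast
  then show ?thesis
  proof cases
    case 1 then show ?thesis by (intro exI[of _ "vector [1,0,0]"]) (simp add: dt_eq)
  next
    case 2 then show ?thesis by (intro exI[of _ "vector [0,1,0]"]) (simp add: dt_eq)
  next
    case 3 then show ?thesis by (intro exI[of _ "vector [0,0,1]"]) (simp add: dt_eq)
  qed
qed

lemma triple: "dt b (cross3 a e) = dt e (cross3 b a)"
  by (simp add: dt_eq cross3_def algebra_simps)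

lemma line_eq_prop:
  assumes "a \<noteq> 0" "b \<noteq> 0" "pg_line a = pg_line (b::'a::field^3)"
  shows "\<exists>c. a = c *s b"
proof (rule ccontr)
  assume np: "\<nexists>c. a = c *s b"
  have "cross3 b a \<noteq> 0" using cross3_zero[of b a] np assms(2) by blast
  then obtain e where e: "dt e (cross3 b a) \<noteq> 0" using exists_e by blast
  let ?w = "cross3 a e"
  have w1: "dt a ?w = 0" by (rule dt_cross1)
  have w2: "dt b ?w \<noteq> 0" using e triple by metis
  have wz: "?w \<noteq> 0" using w2 by (auto simp: dt_eq)
  have "pg_point ?w \<in> pg_line a" using w1 wz pp_mem_line by blast
  moreover have "pg_point ?w \<notin> pg_line b" using w2 wz pp_mem_line by blast
  ultimately show False using assms(3) by simp
qed

lemma smult_indep: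
  assumes "x *s a = y *s (b::'a::field^3)" "\<nexists>c. a = c *s b" "b \<noteq> 0"
  shows "x = 0 \<and> y = 0"
proof -
  have "x = 0"
  proof (rule ccontr)
    assume "x \<noteq> 0"
    then have "a = (y/x) *s b" using assms(1)
      by (metis (no_types, lifting) divide_inverse_commute vector_mul_lcancel vector_smult_assoc
          vector_smult_lid right_inverse mult.commute)
    thus False using assms(2) by blast
  qed
  thus ?thesis using assms(1,3) by simp
qed

lemma lines_through_card:
  assumes "P \<in> (pg_points :: ('a::{field,finite}^3) set set)"
  shows "CARD('a) + 1 \<le> card {l\<in>pg_lines. P\<in>l}"
proof -
  obtain v where v: "v \<noteq> 0" "P = pg_point v" using assms by (rule pg_pointsE)
  obtain a b :: "'a^3" where ab: "a \<noteq> 0" "b \<noteq> 0" "dt a v = 0" "dt b v = 0" "\<nexists>c. a = c *s b"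
  proof -
    consider "v$1 \<noteq> 0" | "v$2 \<noteq> 0" | "v$3 \<noteq> 0" using v vec3_zero by blast
    then show ?thesis
    proof cases
      case 1
      show ?thesis
        by (rule that[of "vector [v$2, - v$1, 0]" "vector [v$3, 0, - v$1]"])
           (use 1 in \<open>auto simp: vec3_eq vec3_zero dt_eq algebra_simps\<close>)
    next
      case 2
      show ?thesis
        by (rule that[of "vector [- v$2, v$1, 0]" "vector [0, v$3, - v$2]"])
           (use 2 in \<open>auto simp: vec3_eq vec3_zero dt_eq algebra_simps\<close>)
    next
      case 3
      show ?thesis
        by (rule that[of "vector [- v$3, 0, v$1]" "vector [0, - v$3, v$2]"])
           (use 3 in \<open>auto simp: vec3_eq vec3_zero dt_eq algebra_simps\<close>)
    qed
  qed
  define f where "f t = pg_line (a + t *s b)" for t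
  have nz: "a + t *s b \<noteq> 0" for t
  proof
    assume "a + t *s b = 0"
    then have "a = (-t) *s b" by (simp add: eq_neg_iff_add_eq_0 vector_smult_lneg)
    thus False using ab(5) by blast
  qed
  have inf: "f t \<in> {l\<in>pg_lines. P\<in>l}" for t
    using nz[of t] ab v by (auto simp: f_def line_in_lines pp_mem_line dt_comm[of _ v] dt_add dt_scale)
  have inb: "pg_line b \<in> {l\<in>pg_lines. P\<in>l}"
    using ab v by (auto simp: line_in_lines pp_mem_line dt_comm[of _ v])
  have injf: "inj f"
  proof (rule injI)
    fix t t' assume "f t = f t'"
    then obtain c where c: "a + t *s b = c *s (a + t' *s b)"
      using line_eq_prop nz f_def by metis
    then have "(1 - c) *s a = (c * t' - t) *s b"
      by (simp add: vec3_eq algebra_simps)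
    then have "1 - c = 0" using smult_indep ab by blast
    then have "t *s b = t' *s b" using c by (simp add: vec3_eq algebra_simps)
    thus "t = t'" using ab(2) by simp
  qed
  have bnot: "pg_line b \<notin> range f"
  proof
    assume "pg_line b \<in> range f"
    then obtain t where "pg_line b = pg_line (a + t *s b)" by (auto simp: f_def)
    then obtain c where c: "b = c *s (a + t *s b)" using line_eq_prop nz ab(2) by metis
    then have "c *s a = (1 - c * t) *s b" by (simp add: vec3_eq algebra_simps)
    then have "c = 0" using smult_indep ab by blast
    thus False using c ab(2) by simp
  qed
  have "card (insert (pg_line b) (range f)) = CARD('a) + 1"
    using bnot injf by (simp add: card_image)
  moreover have "insert (pg_line b) (range f) \<subseteq> {l\<in>pg_lines. P\<in>l}"
    using inf inb by auto
  ultimately show ?thesis using card_mono[OF finite, of "insert (pg_line b) (range f)" "{l\<in>pg_lines. P\<in>l}"] by simp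
qed

lemma sum_lines_through:
  fixes S :: "('a::{field,finite}^3) set set"
  assumes "P \<in> pg_points" "S \<subseteq> pg_points" "P \<notin> S"
  shows "(\<Sum>l\<in>{l\<in>pg_lines. P\<in>l}. card (l \<inter> S)) = card S"
proof -
  let ?L = "{l\<in>pg_lines. P\<in>l}"
  have "S = (\<Union>l\<in>?L. l \<inter> S)"
  proof
    show "S \<subseteq> (\<Union>l\<in>?L. l \<inter> S)"
    proof
      fix R assume R: "R \<in> S"
      then have "R \<noteq> P" using assms by auto
      then obtain l where "l \<in> pg_lines" "P \<in> l" "R \<in> l"
        using line_exists2[of P R] assms R by blast
      thus "R \<in> (\<Union>l\<in>?L. l \<inter> S)" using R by blast
    qed
  qed auto
  moreover have "card (\<Union>l\<in>?L. l \<inter> S) = (\<Sum>l\<in>?L. card (l \<inter> S))"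
  proof (rule card_UN_disjoint)
    show "\<forall>i\<in>?L. \<forall>j\<in>?L. i \<noteq> j \<longrightarrow> i \<inter> S \<inter> (j \<inter> S) = {}"
    proof (intro ballI impI)
      fix i j assume ij: "i \<in> ?L" "j \<in> ?L" "i \<noteq> j"
      show "i \<inter> S \<inter> (j \<inter> S) = {}"
      proof (rule ccontr)
        assume "i \<inter> S \<inter> (j \<inter> S) \<noteq> {}"
        then obtain R where R: "R \<in> i" "R \<in> j" "R \<in> S" by blast
        then have "R \<noteq> P" using assms by auto
        then have "i = j" using line_unique[of i j P R] ij R by auto
        thus False using ij by simp
      qed
    qed
  qed (simp_all add: finite_sets3)
  ultimately show ?thesis by simp
qed

lemma dt_mat: "dt a (B *v w) = dt (transpose B *v a) (w::'a::field^3)"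
  by (simp add: dt_eq matrix_vector_mult_def transpose_def sum_3 algebra_simps)

lemma pi_point: "(\<lambda>v. M *v v) ` pg_point v = pg_point (M *v (v::'a::field^3))"
proof (intro equalityI subsetI)
  fix x assume "x \<in> (\<lambda>v. M *v v) ` pg_point v"
  then obtain c where "c\<noteq>0" "x = M *v (c *s v)" by (auto simp: pg_point_def)
  thus "x \<in> pg_point (M *v v)" by (auto simp: pg_point_def vector_scalar_commute)
next
  fix x assume "x \<in> pg_point (M *v v)"
  then obtain c where c: "c\<noteq>0" "x = c *s (M *v v)" by (auto simp: pg_point_def)
  then have "x = M *v (c *s v)" by (simp add: vector_scalar_commute)
  moreover have "c *s v \<in> pg_point v" using c by (auto simp: pg_point_def)
  ultimately show "x \<in> (\<lambda>v. M *v v) ` pg_point v" by blast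
qed

lemma pi_line:
  fixes M M' :: "'a::field^3^3"
  assumes inv: "M' ** M = mat 1" "M ** M' = mat 1" and a: "a \<noteq> 0"
  shows "(\<lambda>P. (\<lambda>v. M *v v) ` P) ` pg_line a = pg_line (transpose M' *v a)"
    and "transpose M' *v a \<noteq> 0"
proof -
  let ?b = "transpose M' *v a"
  have MM: "M' *v (M *v v) = v" "M *v (M' *v v) = v" for v
    using inv by (simp_all add: matrix_vector_mul_assoc)
  have "transpose M *v ?b = a"
    using inv by (simp add: vector_matrix_mul_assoc)
  then show "?b \<noteq> 0" using a by auto
  show "(\<lambda>P. (\<lambda>v. M *v v) ` P) ` pg_line a = pg_line ?b"
  proof (intro equalityI subsetI)
    fix X assume "X \<in> (\<lambda>P. (\<lambda>v. M *v v) ` P) ` pg_line a"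
    then obtain v where v: "v \<noteq> 0" "dt a v = 0" "X = pg_point (M *v v)"
      unfolding pg_line_dt by (auto simp: pi_point)
    have "M *v v \<noteq> 0" using MM(1)[of v] v(1) by auto
    moreover have "dt ?b (M *v v) = 0" using dt_mat[of a M' "M *v v"] MM v by simp
    ultimately show "X \<in> pg_line ?b" using v by (auto simp: pg_line_dt)
  next
    fix X assume "X \<in> pg_line ?b"
    then obtain w where w: "w \<noteq> 0" "dt ?b w = 0" "X = pg_point w"
      unfolding pg_line_dt by auto
    have "M' *v w \<noteq> 0" using MM(2)[of w] w(1) by auto
    moreover have "dt a (M' *v w) = 0" using dt_mat[of a M' w] w by simp
    moreover have "X = (\<lambda>v. M *v v) ` pg_point (M' *v w)" using w MM by (simp add: pi_point)
    ultimately show "X \<in> (\<lambda>P. (\<lambda>v. M *v v) ` P) ` pg_line a"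
      unfolding pg_line_dt by blast
  qed
qed

lemma proj_comp:
  "M' ** M = mat 1 \<Longrightarrow> projectivity_image M' (projectivity_image M X) = (X::('a::field^3) set set)"
  by (simp add: projectivity_image_def image_image matrix_vector_mul_assoc)

lemma proj_lines:
  fixes M M' :: "'a::field^3^3"
  assumes "M' ** M = mat 1" "M ** M' = mat 1" "l \<in> pg_lines"
  shows "projectivity_image M l \<in> pg_lines"
proof -
  obtain a where "a \<noteq> 0" "l = pg_line a" using assms(3) by (rule pg_linesE)
  thus ?thesis using pi_line[OF assms(1,2)] line_in_lines unfolding projectivity_image_def by metis
qed

lemma transfer:
  fixes T :: "('a::{field,finite}^3) set set" and M :: "'a^3^3"
  assumes "invertible M"
    and sec: "\<forall>l\<in>pg_lines. 2 \<le> card (l \<inter> T) \<longrightarrow> r \<le> card (l \<inter> T)"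
    and tan: "\<forall>P\<in>T. card {l\<in>pg_lines. P\<in>l \<and> 2 \<le> card (l \<inter> T)} \<le> s"
  shows "card (projectivity_image M T) = card T"
    and "\<forall>l\<in>pg_lines. 2 \<le> card (l \<inter> projectivity_image M T) \<longrightarrow> r \<le> card (l \<inter> projectivity_image M T)"
    and "\<forall>P\<in>projectivity_image M T. card {l\<in>pg_lines. P\<in>l \<and> 2 \<le> card (l \<inter> projectivity_image M T)} \<le> s"
proof -
  obtain M' where M': "M ** M' = mat 1" "M' ** M = mat 1" using assms(1) unfolding invertible_def by blast
  let ?F = "projectivity_image M" and ?G = "projectivity_image M'"
  have GF: "?G (?F X) = X" for X :: "('a^3) set set" using proj_comp[OF M'(2)] .
  have FG: "?F (?G X) = X" for X :: "('a^3) set set" using proj_comp[OF M'(1)] .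
  have gf: "(\<lambda>v. M' *v v) ` ((\<lambda>v. M *v v) ` P) = P" for P :: "('a^3) set"
    using M' by (simp add: image_image matrix_vector_mul_assoc)
  have injf: "inj (\<lambda>P. (\<lambda>v. M *v v) ` P)"
    by (rule inj_on_inverseI[where g="\<lambda>P. (\<lambda>v. M' *v v) ` P"]) (rule gf)
  have imgF: "projectivity_image M X = (\<lambda>P. (\<lambda>v. M *v v) ` P) ` X" for X
    by (simp add: projectivity_image_def)
  have injF: "inj ?F" by (metis GF injI)
  have cardF': "card (?F ` X) = card X" for X :: "('a^3) set set set"
    by (rule card_image[OF inj_on_subset[OF injF subset_UNIV]])
  have cardF: "card (?F X) = card X" for X :: "('a^3) set set"
    unfolding imgF by (rule card_image[OF inj_on_subset[OF injf subset_UNIV]])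
  have IntF: "?F X \<inter> ?F Y = ?F (X \<inter> Y)" for X Y :: "('a^3) set set"
    unfolding imgF using injf by (simp add: image_Int)
  have memF: "(\<lambda>P. (\<lambda>v. M *v v) ` P) P \<in> ?F l \<longleftrightarrow> P \<in> l" for P l
    using injf by (simp add: imgF inj_image_mem_iff)
  show "card (?F T) = card T" by (rule cardF)
  show "\<forall>l\<in>pg_lines. 2 \<le> card (l \<inter> ?F T) \<longrightarrow> r \<le> card (l \<inter> ?F T)"
  proof (intro ballI impI)
    fix l :: "('a^3) set set" assume l: "l \<in> pg_lines" and c: "2 \<le> card (l \<inter> ?F T)"
    have l0: "?G l \<in> pg_lines" using proj_lines[OF M'(1,2) l] .
    have "l \<inter> ?F T = ?F (?G l \<inter> T)" using FG IntF by metis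
    then show "r \<le> card (l \<inter> ?F T)" using sec l0 c cardF by metis
  qed
  show "\<forall>P\<in>?F T. card {l\<in>pg_lines. P\<in>l \<and> 2 \<le> card (l \<inter> ?F T)} \<le> s"
  proof
    fix P assume "P \<in> ?F T"
    then obtain P0 where P0: "P0 \<in> T" "P = (\<lambda>v. M *v v) ` P0" by (auto simp: imgF)
    have "{l\<in>pg_lines. P\<in>l \<and> 2 \<le> card (l \<inter> ?F T)} \<subseteq>
          ?F ` {l\<in>pg_lines. P0\<in>l \<and> 2 \<le> card (l \<inter> T)}"
    proof
      fix l assume l: "l \<in> {l\<in>pg_lines. P\<in>l \<and> 2 \<le> card (l \<inter> ?F T)}"
      let ?l0 = "?G l"
      have l0: "?l0 \<in> pg_lines" using proj_lines[OF M'(1,2)] l by blast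
      have e: "l = ?F ?l0" using FG by metis
      have "P0 \<in> ?l0" using l e memF P0 by (metis (no_types, lifting) mem_Collect_eq)
      moreover have "card (?l0 \<inter> T) = card (l \<inter> ?F T)" using e IntF cardF by metis
      ultimately have "?l0 \<in> {l\<in>pg_lines. P0\<in>l \<and> 2 \<le> card (l \<inter> T)}"
        using l0 l by auto
      then show "l \<in> ?F ` {l\<in>pg_lines. P0\<in>l \<and> 2 \<le> card (l \<inter> T)}"
        using e by blast
    qed
    then have "card {l\<in>pg_lines. P\<in>l \<and> 2 \<le> card (l \<inter> ?F T)} \<le>
          card (?F ` {l\<in>pg_lines. P0\<in>l \<and> 2 \<le> card (l \<inter> T)})"
      by (rule card_mono[OF finite])
    also have "\<dots> \<le> s" using tan P0(1) by (simp only: cardF')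
    finally show "card {l\<in>pg_lines. P\<in>l \<and> 2 \<le> card (l \<inter> ?F T)} \<le> s" .
  qed
qed


lemma card_zero_field: "of_nat CARD('a::{field,finite}) = (0::'a)"
proof -
  have "(\<Sum>y\<in>UNIV. y + 1) = (\<Sum>y\<in>UNIV. (y::'a))"
    by (rule sum.reindex_bij_witness[of _ "\<lambda>y. y - 1" "\<lambda>y. y + 1"]) auto
  then show ?thesis by (simp add: sum.distrib)
qed

lemma field_power_card: "(x::'a::{field,finite}) ^ CARD('a) = x"
proof (cases "x = 0")
  case False
  have "x * (\<Prod>y\<in>UNIV-{0}. x * y) = x * x ^ (card (UNIV :: 'a set) - 1) * \<Prod>(UNIV-{0})"
    by (simp add: prod.distrib mult_ac)
  also have "x * x ^ (card (UNIV :: 'a set) - 1) = x ^ Suc (card (UNIV :: 'a set) - 1)"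
    by (subst power_Suc) auto
  also have "Suc (card (UNIV :: 'a set) - 1) = card (UNIV :: 'a set)"
    using finite_UNIV_card_ge_0[where ?'a = 'a] by simp
  also have "(\<Prod>y\<in>UNIV-{0}. x * y) = (\<Prod>y\<in>UNIV-{0}. y)"
    by (rule prod.reindex_bij_witness[of _ "\<lambda>y. y / x" "\<lambda>y. x * y"]) (use False in auto)
  finally show ?thesis
    by simp
qed (use finite_UNIV_card_ge_0[where ?'a = 'a] in auto)

locale trs =
  fixes q h p k :: nat and TY :: "'a::{field,finite} itself"
  assumes p: "prime p" and k: "k \<ge> 1" and qdef: "q = p ^ k" and h: "h \<ge> 2"
    and card: "CARD('a) = q ^ h"
begin

abbreviation Tr :: "'a \<Rightarrow> 'a" where "Tr \<equiv> rel_trace q h"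
abbreviation Fq :: "'a set" where "Fq \<equiv> {y. y ^ q = y}"

lemma q2: "q \<ge> 2"
proof -
  have "p \<ge> 2" using p prime_ge_2_nat by blast
  then have "p ^ 1 \<le> p ^ k" using k by (intro power_increasing) auto
  thus ?thesis using qdef \<open>p \<ge> 2\<close> by simp
qed

lemma CHARp: "CHAR('a) = p"
proof -
  have "CHAR('a) > 0" by (rule finite_imp_CHAR_pos) simp
  then have pc: "prime CHAR('a)" by (rule prime_CHAR_semidom)
  have "CHAR('a) dvd CARD('a)" using card_zero_field of_nat_eq_0_iff_char_dvd by blast
  then have "CHAR('a) dvd p ^ (k * h)" using card qdef by (simp add: power_mult)
  then have "CHAR('a) dvd p" using pc prime_dvd_power by blast
  thus ?thesis using pc p primes_dvd_imp_eq by blast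
qed

lemma frob: "((x::'a) + y) ^ (q ^ i) = x ^ (q ^ i) + y ^ (q ^ i)"
  by (rule freshmans_dream'[where n = "k * i"]) (simp_all add: CHARp p qdef power_mult)

lemma frob_sum: "(sum (f::'b \<Rightarrow> 'a) A) ^ (q ^ i) = (\<Sum>j\<in>A. f j ^ (q ^ i))"
  by (rule freshmans_dream_sum'[where n = "k * i"]) (simp_all add: CHARp p qdef power_mult)

lemma frob1: "((x::'a) + y) ^ q = x ^ q + y ^ q"
  using frob[of x y 1] by simp

lemma Fq_pow: "t \<in> Fq \<Longrightarrow> t ^ (q ^ i) = t"
proof (induction i)
  case (Suc i)
  have "t ^ (q ^ Suc i) = (t ^ (q ^ i)) ^ q" by (simp only: power_Suc2 power_mult)
  thus ?case using Suc by simp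
qed simp

lemma Fq_add: "s \<in> Fq \<Longrightarrow> t \<in> Fq \<Longrightarrow> s + t \<in> Fq"
  using frob1 by simp
lemma Fq_mult: "s \<in> Fq \<Longrightarrow> t \<in> Fq \<Longrightarrow> s * t \<in> Fq"
  by (simp add: power_mult_distrib)
lemma Fq_uminus: "t \<in> Fq \<Longrightarrow> - t \<in> Fq"
proof -
  assume t: "t \<in> Fq"
  have "(- t) ^ q + t ^ q = 0" using frob1[of "-t" t] q2 by (simp add: power_0_left)
  thus ?thesis using t by (simp add: add_eq_0_iff2)
qed
lemma Fq_diff: assumes "s \<in> Fq" "t \<in> Fq" shows "s - t \<in> Fq"
proof -
  have "s + (-t) \<in> Fq" by (rule Fq_add[OF assms(1) Fq_uminus[OF assms(2)]])
  thus ?thesis by (simp only: diff_conv_add_uminus)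
qed
lemma Fq_inv: "t \<in> Fq \<Longrightarrow> inverse t \<in> Fq"
  by (simp add: power_inverse)
lemma Fq_divide: assumes "s \<in> Fq" "t \<in> Fq" shows "s / t \<in> Fq"
proof -
  have "s * inverse t \<in> Fq" by (rule Fq_mult[OF assms(1) Fq_inv[OF assms(2)]])
  thus ?thesis by (simp only: divide_inverse)
qed
lemma Fq_0: "0 \<in> Fq" using q2 by simp
lemma Fq_1: "1 \<in> Fq" by simp

lemma Tr_def': "Tr x = (\<Sum>i<h. x ^ (q ^ i))"
  by (simp add: rel_trace_def)

lemma Tr_add: "Tr (x + y) = Tr x + Tr y"
  by (simp add: Tr_def' frob sum.distrib)

lemma Tr_0: "Tr 0 = 0"
  using q2 by (simp add: Tr_def' power_0_left)

lemma Tr_scale: "t \<in> Fq \<Longrightarrow> Tr (t * x) = t * Tr x"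
  by (simp add: Tr_def' power_mult_distrib Fq_pow sum_distrib_left)

lemma Tr_uminus: "Tr (- x) = - Tr x"
  using Tr_scale[of "-1" x] Fq_uminus[OF Fq_1] by simp

lemma Tr_diff: "Tr (x - y) = Tr x - Tr y"
  using Tr_add[of x "-y"] Tr_uminus[of y] by simp

lemma pow_card: "(x::'a) ^ (q ^ h) = x"
  using field_power_card[of x] card by simp

lemma Tr_in_Fq: "Tr x \<in> Fq"
proof -
  have "(Tr x) ^ q = (\<Sum>i<h. (x ^ (q ^ i)) ^ (q ^ 1))"
    using frob_sum[of "\<lambda>i. x ^ (q ^ i)" "{..<h}" 1] by (simp add: Tr_def')
  also have "\<dots> = (\<Sum>i<h. x ^ (q ^ Suc i))"
    by (simp add: power_mult[symmetric] mult.commute)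
  finally have e: "(Tr x) ^ q = (\<Sum>i<h. x ^ (q ^ Suc i))" .
  have "(\<Sum>i<Suc h. x ^ (q ^ i)) = x ^ (q ^ 0) + (\<Sum>i<h. x ^ (q ^ Suc i))"
    by (rule sum.lessThan_Suc_shift)
  moreover have "(\<Sum>i<Suc h. x ^ (q ^ i)) = Tr x + x ^ (q ^ h)"
    by (simp add: Tr_def')
  ultimately have "(\<Sum>i<h. x ^ (q ^ Suc i)) = Tr x"
    using pow_card by (simp add: algebra_simps)
  thus ?thesis using e by simp
qed

lemma fiber_card: "card {x::'a. Tr x = c} \<le> q ^ (h - 1)"
proof -
  define P where "P = (\<Sum>i<h. monom (1::'a) (q ^ i)) - [:c:]"
  have pe: "poly P x = Tr x - c" for x
    by (simp add: P_def poly_sum poly_monom Tr_def')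
  have qinj: "q ^ i = q ^ j \<longleftrightarrow> i = j" for i j using q2 by (simp add: power_inject_exp)
  have qpos: "q ^ (h - 1) > 0" using q2 by simp
  have "coeff P (q ^ (h - 1)) = (\<Sum>i<h. if q ^ i = q ^ (h - 1) then 1 else 0)"
    using qpos q2 by (simp add: P_def coeff_sum coeff_pCons split: nat.split)
  also have "\<dots> = (\<Sum>i\<in>{h - 1}. 1)"
    using h by (intro sum.mono_neutral_cong_right) (auto simp: qinj)
  finally have "coeff P (q ^ (h - 1)) = 1" by simp
  then have Pnz: "P \<noteq> 0" by auto
  have "degree P \<le> q ^ (h - 1)"
    unfolding P_def
  proof (rule degree_diff_le)
    show "degree (\<Sum>i<h. monom (1::'a) (q ^ i)) \<le> q ^ (h - 1)"
    proof (rule degree_sum_le)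
      fix i assume "i \<in> {..<h}"
      then have "q ^ i \<le> q ^ (h - 1)" using q2 by (intro power_increasing) auto
      thus "degree (monom (1::'a) (q ^ i)) \<le> q ^ (h - 1)" using degree_monom_le le_trans by blast
    qed simp
  qed simp
  moreover have "card {x. poly P x = 0} \<le> degree P" by (rule card_poly_roots_bound[OF Pnz])
  moreover have "{x::'a. Tr x = c} = {x. poly P x = 0}" by (simp add: pe)
  ultimately show ?thesis by simp
qed

lemma Fq_card_le: "card Fq \<le> q"
proof -
  define P where "P = monom (1::'a) q - monom 1 1"
  have "coeff P q = 1" using q2 by (simp add: P_def)
  then have Pnz: "P \<noteq> 0" by auto
  have "degree P \<le> q" unfolding P_def using q2
    by (intro degree_diff_le) (auto intro: le_trans[OF degree_monom_le])
  moreover have "card {x. poly P x = 0} \<le> degree P" by (rule card_poly_roots_bound[OF Pnz])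
  moreover have "Fq = {x. poly P x = 0}" by (simp add: P_def poly_monom)
  ultimately show ?thesis by simp
qed

lemma Fq_card_ge: "q \<le> card Fq"
proof -
  have "UNIV = (\<Union>c\<in>Fq. {x::'a. Tr x = c})" using Tr_in_Fq by blast
  then have "q ^ h \<le> (\<Sum>c\<in>Fq. card {x::'a. Tr x = c})"
    using card_UN_le[of Fq "\<lambda>c. {x::'a. Tr x = c}"] card by simp
  also have "\<dots> \<le> (\<Sum>c\<in>Fq. q ^ (h - 1))" by (intro sum_mono fiber_card)
  also have "\<dots> = card Fq * q ^ (h - 1)" by simp
  finally have A: "q ^ h \<le> card Fq * q ^ (h - 1)" .
  have "q ^ h = q * q ^ (h - 1)" using h by (cases h) auto
  then have "q * q ^ (h - 1) \<le> card Fq * q ^ (h - 1)" using A by simp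
  thus ?thesis using q2 by simp
qed


lemma two_distinct: "finite S \<Longrightarrow> 2 \<le> card S \<Longrightarrow> \<exists>x\<in>S. \<exists>y\<in>S. x \<noteq> y"
  using card_le_Suc0_iff_eq[of S] by force

lemma two_other: "finite S \<Longrightarrow> 2 \<le> card S \<Longrightarrow> \<exists>R\<in>S. R \<noteq> P"
  using two_distinct by metis

lemma zdiff: "u \<noteq> 0 \<Longrightarrow> u$3 = 0 \<Longrightarrow> v$3 \<noteq> 0 \<Longrightarrow> pg_point u \<noteq> pg_point (v::'b::field^3)"
  by (auto simp: pp_eq_iff)

lemma vec_add3: "vector [a,b,c] + vector [d,e,f] = (vector [a+d,b+e,c+f] :: 'b::field^3)"
  by (simp add: vec3_eq)
lemma vec_diff3: "vector [a,b,c] - vector [d,e,f] = (vector [a-d,b-e,c-f] :: 'b::field^3)"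
  by (simp add: vec3_eq)
lemma vec_scale3: "t *s vector [a,b,c] = (vector [t*a,t*b,t*c] :: 'b::field^3)"
  by (simp add: vec3_eq)
lemma vec_zero3: "(vector [a,b,c] :: 'b::field^3) = 0 \<longleftrightarrow> a = 0 \<and> b = 0 \<and> c = 0"
  by (simp add: vec3_zero)

definition U :: "('a^3) set" where "U = {vector [x, Tr x, y] | x y. y \<in> Fq}"

abbreviation T :: "('a^3) set set" where "T \<equiv> trace_blocking_set q h"

lemma T_alt: "T = {pg_point u | u. u \<in> U \<and> u \<noteq> 0}"
proof (intro equalityI subsetI)
  fix P assume "P \<in> T"
  then obtain x y where xy: "P = pg_point (vector [x, Tr x, y])" "y \<in> Fq" "(x, y) \<noteq> (0, 0)"
    unfolding trace_blocking_set_def by auto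
  have "vector [x, Tr x, y] \<in> U" using xy(2) unfolding U_def by blast
  moreover have "vector [x, Tr x, y] \<noteq> (0::'a^3)" using xy(3) by (simp add: vec_zero3)
  ultimately show "P \<in> {pg_point u | u. u \<in> U \<and> u \<noteq> 0}" using xy(1) by blast
next
  fix P assume "P \<in> {pg_point u | u. u \<in> U \<and> u \<noteq> 0}"
  then obtain x y where xy: "P = pg_point (vector [x, Tr x, y])" "y \<in> Fq" "vector [x, Tr x, y] \<noteq> (0::'a^3)"
    unfolding U_def by auto
  have "(x, y) \<noteq> (0, 0)" using xy(3) Tr_0 by (auto simp: vec_zero3)
  then show "P \<in> T" using xy unfolding trace_blocking_set_def by blast
qed

lemma U_add: assumes "u \<in> U" "w \<in> U" shows "u + w \<in> U"
proof -
  obtain x1 y1 where 1: "u = vector [x1, Tr x1, y1]" "y1 \<in> Fq" using assms(1) unfolding U_def by blast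
  obtain x2 y2 where 2: "w = vector [x2, Tr x2, y2]" "y2 \<in> Fq" using assms(2) unfolding U_def by blast
  have "u + w = vector [x1 + x2, Tr (x1 + x2), y1 + y2]" using 1 2 by (simp add: vec_add3 Tr_add)
  moreover have "y1 + y2 \<in> Fq" using Fq_add 1 2 by blast
  ultimately show ?thesis unfolding U_def by blast
qed

lemma U_scale: assumes "t \<in> Fq" "u \<in> U" shows "t *s u \<in> U"
proof -
  obtain x1 y1 where 1: "u = vector [x1, Tr x1, y1]" "y1 \<in> Fq" using assms(2) unfolding U_def by blast
  have "t *s u = vector [t * x1, Tr (t * x1), t * y1]" using 1 assms(1) by (simp add: vec_scale3 Tr_scale)
  moreover have "t * y1 \<in> Fq" using Fq_mult 1 assms(1) by blast
  ultimately show ?thesis unfolding U_def by blast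
qed

lemma T_points: "T \<subseteq> pg_points"
  unfolding T_alt by (auto intro: pp_in_points)

lemma T_sec: "\<forall>l\<in>pg_lines. 2 \<le> card (l \<inter> T) \<longrightarrow> q + 1 \<le> card (l \<inter> T)"
proof (intro ballI impI)
  fix l :: "('a^3) set set" assume l: "l \<in> pg_lines" and c2: "2 \<le> card (l \<inter> T)"
  obtain a where a: "a \<noteq> 0" "l = pg_line a" using l by (rule pg_linesE)
  obtain P1 P2 where P: "P1 \<in> l \<inter> T" "P2 \<in> l \<inter> T" "P1 \<noteq> P2"
    using two_distinct[OF finite c2] by blast
  obtain u1 where u1: "u1 \<in> U" "u1 \<noteq> 0" "P1 = pg_point u1" using P(1) T_alt by auto
  obtain u2 where u2: "u2 \<in> U" "u2 \<noteq> 0" "P2 = pg_point u2" using P(2) T_alt by auto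
  have d1: "dt a u1 = 0" using P(1) u1 a pp_mem_line by auto
  have d2: "dt a u2 = 0" using P(2) u2 a pp_mem_line by auto
  have np: "\<nexists>c. u1 = c *s u2"
  proof
    assume "\<exists>c. u1 = c *s u2"
    then obtain c where c: "u1 = c *s u2" by blast
    then have "c \<noteq> 0" using u1 by auto
    then have "pg_point u1 = pg_point u2" using c pp_scale by simp
    then show False using P(3) u1 u2 by simp
  qed
  define g where "g t = pg_point (u1 + t *s u2)" for t
  have nz: "u1 + t *s u2 \<noteq> 0" for t
  proof
    assume "u1 + t *s u2 = 0"
    then have "u1 = (-t) *s u2" by (simp add: eq_neg_iff_add_eq_0 vector_smult_lneg)
    thus False using np by blast
  qed
  have gin: "g t \<in> l \<inter> T" if t: "t \<in> Fq" for t
  proof -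
    have "u1 + t *s u2 \<in> U" using U_add U_scale t u1 u2 by blast
    moreover have "dt a (u1 + t *s u2) = 0" using d1 d2 by (simp add: dt_add dt_scale)
    ultimately have "g t \<in> T" using nz[of t] unfolding g_def T_alt by blast
    moreover have "g t \<in> l" using nz[of t] a \<open>dt a (u1 + t *s u2) = 0\<close> by (simp add: g_def pp_mem_line)
    ultimately show ?thesis by simp
  qed
  have injg: "inj_on g Fq"
  proof (rule inj_onI)
    fix t t' assume "g t = g t'"
    then have "pg_point (u1 + t *s u2) = pg_point (u1 + t' *s u2)" by (simp add: g_def)
    then obtain c where c: "u1 + t *s u2 = c *s (u1 + t' *s u2)"
      using pp_eq_iff[OF nz[of t]] by blast
    then have "(1 - c) *s u1 = (c * t' - t) *s u2"
      by (simp add: vec3_eq algebra_simps)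
    then have "1 - c = 0" using smult_indep np u2 by blast
    then have "t *s u2 = t' *s u2" using c by (simp add: vec3_eq algebra_simps)
    thus "t = t'" using u2 by simp
  qed
  have P2not: "P2 \<notin> g ` Fq"
  proof
    assume "P2 \<in> g ` Fq"
    then obtain t where "pg_point u2 = pg_point (u1 + t *s u2)" using u2 by (auto simp: g_def)
    then obtain c where c: "u2 = c *s (u1 + t *s u2)" using pp_eq_iff[OF u2(2)] by blast
    then have "c *s u1 = (1 - c * t) *s u2" by (simp add: vec3_eq algebra_simps)
    then have "c = 0" using smult_indep np u2 by blast
    thus False using c u2 by simp
  qed
  have "card (insert P2 (g ` Fq)) = card Fq + 1"
    using P2not injg by (simp add: card_image)
  moreover have "insert P2 (g ` Fq) \<subseteq> l \<inter> T" using gin P(2) by auto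
  ultimately have "card Fq + 1 \<le> card (l \<inter> T)"
    using card_mono[OF finite, of "insert P2 (g ` Fq)" "l \<inter> T"] by simp
  thus "q + 1 \<le> card (l \<inter> T)" using Fq_card_ge by simp
qed

definition Aff :: "('a^3) set set" where "Aff = range (\<lambda>x. pg_point (vector [x, Tr x, 1]))"
definition Inf :: "('a^3) set set" where
  "Inf = insert (pg_point (vector [1,0,0])) ((\<lambda>d. pg_point (vector [d,1,0])) ` {d. Tr d = 1})"

lemma aff_mem:
  assumes "y \<in> Fq" "y \<noteq> 0"
  shows "pg_point (vector [x, Tr x, y]) = pg_point (vector [x/y, Tr (x/y), 1])"
proof -
  have "Tr (x/y) = Tr (inverse y * x)" by (simp add: divide_inverse mult.commute)
  also have "\<dots> = inverse y * Tr x" using Tr_scale Fq_inv assms(1) by blast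
  finally have e: "Tr (x/y) = Tr x / y" by (simp add: divide_inverse mult.commute)
  have "vector [x, Tr x, y] = y *s (vector [x/y, Tr (x/y), 1] :: 'a^3)"
    unfolding e using assms(2) by (simp add: vec3_eq)
  thus ?thesis using pp_scale assms(2) by metis
qed

lemma inf_mem:
  assumes "x \<noteq> 0"
  shows "pg_point (vector [x, Tr x, 0]) \<in> Inf"
proof (cases "Tr x = 0")
  case True
  then have "vector [x, Tr x, 0] = x *s (vector [1,0,0] :: 'a^3)" by (simp add: vec3_eq)
  then have "pg_point (vector [x, Tr x, 0]) = pg_point (vector [1,0,0] :: 'a^3)" using pp_scale assms by simp
  then show ?thesis unfolding Inf_def by simp
next
  case False
  let ?d = "x / Tr x"
  have "Tr ?d = inverse (Tr x) * Tr x"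
    using Tr_scale[OF Fq_inv[OF Tr_in_Fq[of x]], of x] by (simp add: divide_inverse mult.commute)
  then have Td: "Tr ?d = 1" using False by simp
  have "vector [x, Tr x, 0] = Tr x *s (vector [?d, 1, 0] :: 'a^3)" using False by (simp add: vec3_eq)
  then have "pg_point (vector [x, Tr x, 0]) = pg_point (vector [?d, 1, 0])" using pp_scale False by metis
  moreover have "pg_point (vector [?d, 1, 0]) \<in> (\<lambda>d. pg_point (vector [d,1,0])) ` {d::'a. Tr d = 1}"
    using Td by (intro imageI) simp
  ultimately show ?thesis unfolding Inf_def by simp
qed

lemma T_sub: "T \<subseteq> Aff \<union> Inf"
proof
  fix P assume "P \<in> T"
  then obtain x y where xy: "P = pg_point (vector [x, Tr x, y])" "y \<in> Fq" "(x, y) \<noteq> (0, 0)"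
    unfolding trace_blocking_set_def by auto
  show "P \<in> Aff \<union> Inf"
  proof (cases "y = 0")
    case True
    then have "x \<noteq> 0" using xy(3) by simp
    then show ?thesis using xy(1) True inf_mem[of x] by simp
  next
    case False
    then have "P = pg_point (vector [x/y, Tr (x/y), 1])" using xy(1,2) aff_mem[of y x] by simp
    then show ?thesis unfolding Aff_def by blast
  qed
qed

lemma Inf_card: "card Inf \<le> q ^ (h - 1) + 1"
proof -
  have "card Inf \<le> card ((\<lambda>d. pg_point (vector [d,1,0])) ` {d::'a. Tr d = 1}) + 1"
    unfolding Inf_def by (simp add: card_insert_if)
  also have "\<dots> \<le> card {d::'a. Tr d = 1} + 1" by (simp add: card_image_le)
  also have "\<dots> \<le> q ^ (h - 1) + 1" using fiber_card by simp
  finally show ?thesis .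
qed

lemma T_card: "card T \<le> q ^ h + q ^ (h - 1) + 1"
proof -
  have "card T \<le> card (Aff \<union> Inf)" by (rule card_mono[OF finite T_sub])
  also have "\<dots> \<le> card Aff + card Inf" by (rule card_Un_le)
  also have "card Aff \<le> q ^ h"
  proof -
    have "card Aff \<le> card (UNIV :: 'a set)" unfolding Aff_def by (rule card_image_le) simp
    thus ?thesis using card by simp
  qed
  finally show ?thesis using Inf_card by simp
qed


lemma Inf_form: assumes "I \<in> Inf" shows "\<exists>w. w \<noteq> 0 \<and> w$3 = 0 \<and> I = pg_point w"
proof -
  from assms consider "I = pg_point (vector [1,0,0])" | d where "I = pg_point (vector [d,1,0])"
    unfolding Inf_def by blast
  then show ?thesis
  proof cases
    case 1
    show ?thesis by (rule exI[of _ "vector [1,0,0]"]) (simp add: 1 vec_zero3)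
  next
    case 2
    show ?thesis by (rule exI[of _ "vector [d,1,0]"]) (simp add: 2 vec_zero3)
  qed
qed

lemma vA_nz: "(vector [b, c, 1] :: 'a^3) \<noteq> 0"
  by (simp add: vec_zero3)

lemma Inf_ne_Aff: assumes "I \<in> Inf" shows "I \<noteq> pg_point (vector [b, c, 1])"
proof -
  obtain w where w: "w \<noteq> 0" "w$3 = 0" "I = pg_point w" using Inf_form[OF assms] by blast
  show ?thesis using zdiff[of w "vector [b, c, 1]"] w by simp
qed

lemma Inf_pts: assumes "I \<in> Inf" shows "I \<in> pg_points"
proof -
  obtain w where w: "w \<noteq> 0" "w$3 = 0" "I = pg_point w" using Inf_form[OF assms] by blast
  show ?thesis using pp_in_points[OF w(1)] w by simp
qed

lemma Inf_linf: assumes "I \<in> Inf" shows "I \<in> pg_line (vector [0,0,1])"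
proof -
  obtain w where w: "w \<noteq> 0" "w$3 = 0" "I = pg_point w" using Inf_form[OF assms] by blast
  show ?thesis using pp_mem_line[OF w(1)] w by (simp add: dt_eq)
qed

lemma linf_line: "pg_line (vector [0,0,1] :: 'a^3) \<in> pg_lines"
  by (rule line_in_lines) (simp add: vec_zero3)

lemma diff_on_line:
  assumes "l \<in> pg_lines" "u \<noteq> 0" "v \<noteq> 0" "pg_point u \<in> l" "pg_point v \<in> l" "u - v \<noteq> (0::'b::field^3)"
  shows "pg_point (u - v) \<in> l"
proof -
  obtain a where a: "a \<noteq> 0" "l = pg_line a" using assms(1) by (rule pg_linesE)
  have "dt a u = 0" "dt a v = 0" using assms a pp_mem_line by auto
  then have "dt a (u - v) = 0" by (simp add: dt_diff)
  thus ?thesis using a pp_mem_line[OF assms(6)] by simp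
qed

lemma sec_inf_case:
  assumes P: "P \<in> Inf" and l: "l \<in> pg_lines" "P \<in> l" and R: "R \<in> l" "R \<in> Inf" "R \<noteq> P"
  shows "l = pg_line (vector [0,0,1])"
  using line_unique[OF l(1) linf_line l(2) Inf_linf[OF P] R(1) Inf_linf[OF R(2)]] R(3) by simp

lemma T_tan: "\<forall>P\<in>T. card {l\<in>pg_lines. P\<in>l \<and> 2 \<le> card (l \<inter> T)} \<le> q ^ (h - 1) + 1"
proof
  fix P assume PT: "P \<in> T"
  let ?S = "{l\<in>pg_lines. P\<in>l \<and> 2 \<le> card (l \<inter> T)}"
  let ?linf = "pg_line (vector [0,0,1]) :: ('a^3) set set"
  have other: "\<exists>R\<in>l \<inter> T. R \<noteq> P" if "l \<in> ?S" for l
    using two_other[OF finite, of "l \<inter> T" P] that by simp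
  have RT: "R \<in> Aff \<or> R \<in> Inf" if "R \<in> T" for R using T_sub that by blast
  have qq: "q \<le> q ^ (h - 1)" using power_increasing[of 1 "h - 1" q] h q2 by simp
  consider (A) b where "P = pg_point (vector [b, Tr b, 1])"
    | (E) "P = pg_point (vector [1,0,0])"
    | (D) d where "Tr d = 1" "P = pg_point (vector [d,1,0])"
  proof -
    have "P \<in> Aff \<or> P \<in> Inf" using RT[OF PT] .
    then show ?thesis
    proof
      assume "P \<in> Aff"
      then obtain b where "P = pg_point (vector [b, Tr b, 1])" unfolding Aff_def by blast
      thus ?thesis using that(1) by blast
    next
      assume "P \<in> Inf"
      then have "P = pg_point (vector [1,0,0]) \<or> P \<in> (\<lambda>d. pg_point (vector [d,1,0])) ` {d. Tr d = 1}"
        unfolding Inf_def by simp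
      thus ?thesis using that(2,3) by blast
    qed
  qed
  then show "card ?S \<le> q ^ (h - 1) + 1"
  proof cases
    case A
    define J where "J R = (SOME l. l \<in> pg_lines \<and> P \<in> l \<and> R \<in> l)" for R
    have Pp: "P \<in> pg_points" using PT T_points by blast
    have J: "J R \<in> pg_lines \<and> P \<in> J R \<and> R \<in> J R" if "R \<in> pg_points" "R \<noteq> P" for R
    proof -
      have "\<exists>l. l \<in> pg_lines \<and> P \<in> l \<and> R \<in> l" using line_exists2[OF Pp that(1)] that(2) by auto
      then show ?thesis unfolding J_def by (rule someI_ex)
    qed
    have Jeq: "l = J R" if "l \<in> pg_lines" "P \<in> l" "R \<in> l" "R \<in> pg_points" "R \<noteq> P" for l R
      using line_unique[OF that(1) _ that(2) _ that(3) _ that(5)[symmetric]] J[OF that(4,5)] by blast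
    have "?S \<subseteq> J ` Inf"
    proof
      fix l assume ls: "l \<in> ?S"
      then have l: "l \<in> pg_lines" "P \<in> l" by auto
      obtain R where R: "R \<in> l" "R \<in> T" "R \<noteq> P" using other[OF ls] by blast
      show "l \<in> J ` Inf"
      proof (cases "R \<in> Inf")
        case True
        then show ?thesis using Jeq[OF l R(1) Inf_pts[OF True] R(3)] by blast
      next
        case False
        then obtain c where c: "R = pg_point (vector [c, Tr c, 1])" using RT[OF R(2)] unfolding Aff_def by blast
        have cb: "c \<noteq> b" using c R(3) A by auto
        let ?w = "vector [c, Tr c, 1] - vector [b, Tr b, 1] :: 'a^3"
        have w: "?w = vector [c - b, Tr (c - b), 0]" by (simp add: vec_diff3 Tr_diff)
        have wnz: "?w \<noteq> 0" using cb w by (simp add: vec_zero3)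
        have Iin: "pg_point ?w \<in> l"
          using diff_on_line[OF l(1) vA_nz vA_nz _ _ wnz] R(1) l(2) c A by simp
        have II: "pg_point ?w \<in> Inf" using w inf_mem cb by simp
        have "pg_point ?w \<noteq> P" using Inf_ne_Aff[OF II] A by simp
        then show ?thesis using Jeq[OF l Iin Inf_pts[OF II]] II by blast
      qed
    qed
    then have "card ?S \<le> card (J ` Inf)" by (rule card_mono[OF finite])
    also have "\<dots> \<le> card Inf" by (rule card_image_le[OF finite])
    finally show ?thesis using Inf_card by simp
  next
    case E
    have PI: "P \<in> Inf" using E unfolding Inf_def by simp
    have "?S \<subseteq> insert ?linf ((\<lambda>t. pg_line (vector [0, 1, -t])) ` Fq)"
    proof
      fix l assume ls: "l \<in> ?S"
      then have l: "l \<in> pg_lines" "P \<in> l" by auto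
      obtain R where R: "R \<in> l" "R \<in> T" "R \<noteq> P" using other[OF ls] by blast
      show "l \<in> insert ?linf ((\<lambda>t. pg_line (vector [0, 1, -t])) ` Fq)"
      proof (cases "R \<in> Inf")
        case True
        then show ?thesis using sec_inf_case[OF PI l R(1) True R(3)] by simp
      next
        case False
        then obtain c where c: "R = pg_point (vector [c, Tr c, 1])" using RT[OF R(2)] unfolding Aff_def by blast
        let ?m = "pg_line (vector [0, 1, - Tr c]) :: ('a^3) set set"
        have m: "?m \<in> pg_lines" by (rule line_in_lines) (simp add: vec_zero3)
        have "P \<in> ?m" using E by (simp add: pp_mem_line vec_zero3 dt_eq)
        moreover have "R \<in> ?m" using c by (simp add: pp_mem_line vec_zero3 dt_eq)
        ultimately have "l = ?m" using line_unique[OF l(1) m l(2) _ R(1) _ R(3)[symmetric]] by simp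
        then show ?thesis using Tr_in_Fq by blast
      qed
    qed
    then have "card ?S \<le> card (insert ?linf ((\<lambda>t. pg_line (vector [0, 1, -t])) ` Fq))"
      by (rule card_mono[OF finite])
    also have "\<dots> \<le> card ((\<lambda>t. pg_line (vector [0, 1, -t])) ` Fq) + 1"
      by (simp add: card_insert_if)
    also have "\<dots> \<le> card Fq + 1" using card_image_le[OF finite] by simp
    finally show ?thesis using Fq_card_le qq by simp
  next
    case D
    have PI: "P \<in> Inf" using D unfolding Inf_def by simp
    let ?K = "(\<lambda>t. pg_line (vector [1, - d, t])) ` {t::'a. Tr t = 0}"
    have "?S \<subseteq> insert ?linf ?K"
    proof
      fix l assume ls: "l \<in> ?S"
      then have l: "l \<in> pg_lines" "P \<in> l" by auto
      obtain R where R: "R \<in> l" "R \<in> T" "R \<noteq> P" using other[OF ls] by blast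
      show "l \<in> insert ?linf ?K"
      proof (cases "R \<in> Inf")
        case True
        then show ?thesis using sec_inf_case[OF PI l R(1) True R(3)] by simp
      next
        case False
        then obtain c where c: "R = pg_point (vector [c, Tr c, 1])" using RT[OF R(2)] unfolding Aff_def by blast
        let ?m = "pg_line (vector [1, - d, d * Tr c - c]) :: ('a^3) set set"
        have m: "?m \<in> pg_lines" by (rule line_in_lines) (simp add: vec_zero3)
        have "P \<in> ?m" using D by (simp add: pp_mem_line vec_zero3 dt_eq)
        moreover have "R \<in> ?m" using c by (simp add: pp_mem_line vec_zero3 dt_eq algebra_simps)
        ultimately have "l = ?m" using line_unique[OF l(1) m l(2) _ R(1) _ R(3)[symmetric]] by simp
        moreover have "Tr (d * Tr c - c) = 0"
        proof -
          have "Tr (d * Tr c) = Tr c * Tr d" using Tr_scale[OF Tr_in_Fq[of c], of d] by (simp add: mult.commute)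
          thus ?thesis using D(1) by (simp add: Tr_diff)
        qed
        ultimately show ?thesis by blast
      qed
    qed
    then have "card ?S \<le> card (insert ?linf ?K)" by (rule card_mono[OF finite])
    also have "\<dots> \<le> card ?K + 1" by (simp add: card_insert_if)
    also have "\<dots> \<le> card {t::'a. Tr t = 0} + 1" using card_image_le[OF finite] by simp
    finally show ?thesis using fiber_card[of 0] by simp
  qed
qed

end


lemma main_count:
  fixes S1 S2 :: "('a::{field,finite}^3) set set"
  assumes S1p: "S1 \<subseteq> pg_points" and S2p: "S2 \<subseteq> pg_points" and dis: "S1 \<inter> S2 = {}"
    and b1: "\<forall>l\<in>pg_lines. 1 \<le> card (l \<inter> S1)" and b2: "\<forall>l\<in>pg_lines. 1 \<le> card (l \<inter> S2)"
    and sec2: "\<forall>l\<in>pg_lines. 2 \<le> card (l \<inter> S2) \<longrightarrow> q + 1 \<le> card (l \<inter> S2)"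
    and c2: "card S2 \<le> CARD('a) + r + 1"
    and tan1: "\<forall>P\<in>S1. card {l\<in>pg_lines. P\<in>l \<and> 2 \<le> card (l \<inter> S1)} \<le> r + 1"
    and P: "P \<in> S1" and qpos: "q > 0" and rs: "r = q * s"
  shows "CARD('a) - r - s \<le> card {l\<in>pg_lines. P\<in>l \<and> card (l \<inter> (S1 \<union> S2)) = 2}"
proof -
  let ?LP = "{l\<in>pg_lines. P\<in>l}"
  let ?A = "{l\<in>pg_lines. P\<in>l \<and> 2 \<le> card (l \<inter> S1)}"
  let ?B = "{l\<in>?LP. 2 \<le> card (l \<inter> S2)}"
  let ?G = "{l\<in>pg_lines. P\<in>l \<and> card (l \<inter> (S1 \<union> S2)) = 2}"
  have Pp: "P \<in> pg_points" using P S1p by blast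
  have PS2: "P \<notin> S2" using P dis by blast
  have LP: "CARD('a) + 1 \<le> card ?LP" by (rule lines_through_card[OF Pp])
  have A: "card ?A \<le> r + 1" using tan1 P by blast
  have sumeq: "(\<Sum>l\<in>?LP. card (l \<inter> S2)) = card S2" by (rule sum_lines_through[OF Pp S2p PS2])
  have "(\<Sum>l\<in>?LP. 1 + (if l \<in> ?B then q else 0)) \<le> (\<Sum>l\<in>?LP. card (l \<inter> S2))"
  proof (rule sum_mono)
    fix l assume l: "l \<in> ?LP"
    show "1 + (if l \<in> ?B then q else 0) \<le> card (l \<inter> S2)"
      using sec2 b2 l by auto
  qed
  moreover have "(\<Sum>l\<in>?LP. 1 + (if l \<in> ?B then q else 0)) = card ?LP + q * card ?B"
  proof -
    have "(\<Sum>l\<in>?LP. (if l \<in> ?B then q else 0)) = (\<Sum>l\<in>?LP \<inter> ?B. q)"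
      by (rule sum.inter_restrict[OF finite, symmetric])
    also have "?LP \<inter> ?B = ?B" by blast
    finally have s1: "(\<Sum>l\<in>?LP. (if l \<in> ?B then q else 0)) = q * card ?B" by simp
    have "(\<Sum>l\<in>?LP. 1 + (if l \<in> ?B then q else 0)) = (\<Sum>l\<in>?LP. 1) + (\<Sum>l\<in>?LP. (if l \<in> ?B then q else 0))"
      by (rule sum.distrib)
    also have "\<dots> = card ?LP + q * card ?B" by (simp only: s1) simp
    finally show ?thesis .
  qed
  ultimately have "card ?LP + q * card ?B \<le> card S2" using sumeq by simp
  then have "q * card ?B \<le> q * s" using LP c2 rs by linarith
  then have B: "card ?B \<le> s" using qpos by simp
  have sub: "?LP - (?A \<union> ?B) \<subseteq> ?G"
  proof
    fix l assume l: "l \<in> ?LP - (?A \<union> ?B)"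
    then have l1: "card (l \<inter> S1) = 1" using b1 by fastforce
    have l2: "card (l \<inter> S2) = 1" using l b2 by fastforce
    have "card (l \<inter> (S1 \<union> S2)) = card ((l \<inter> S1) \<union> (l \<inter> S2))" by (simp add: Int_Un_distrib)
    also have "\<dots> = card (l \<inter> S1) + card (l \<inter> S2)" by (rule card_Un_disjoint) (use dis in auto)
    finally show "l \<in> ?G" using l l1 l2 by simp
  qed
  have "card ?LP - card (?A \<union> ?B) \<le> card (?LP - (?A \<union> ?B))" by (rule diff_card_le_card_Diff[OF finite])
  also have "\<dots> \<le> card ?G" by (rule card_mono[OF finite sub])
  finally have "card ?LP - card (?A \<union> ?B) \<le> card ?G" .
  moreover have "card (?A \<union> ?B) \<le> card ?A + card ?B" by (rule card_Un_le)
  ultimately show ?thesis using LP A B by linarith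
qed

theorem proposition2p11:
  fixes L1 L2 :: "('a::{field,finite} ^ 3) set set"
    and q h :: nat
  assumes "prime_power q"
    and "h \<ge> 2"
    and "CARD('a) = q ^ h"
    and "blocking_set L1" and "blocking_set L2"
    and "L1 \<inter> L2 = {}"
    and "proj_equivalent L1 (trace_blocking_set q h)"
    and "proj_equivalent L2 (trace_blocking_set q h)"
  shows "(\<forall>P\<in>L1 \<union> L2.
           card {l \<in> pg_lines. P \<in> l \<and> card (l \<inter> (L1 \<union> L2)) = 2}
             \<ge> q ^ h - q ^ (h - 1) - q ^ (h - 2))
         \<and> minimal_double_blocking_set (L1 \<union> L2)"
proof -
  obtain p k where pk: "prime p" "k \<ge> 1" "q = p ^ k" using assms(1) unfolding prime_power_def by blast
  interpret trs q h p k "TYPE('a)"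
    by unfold_locales (use pk assms(2,3) in auto)
  obtain A1 where A1: "invertible A1" "projectivity_image A1 T = L1"
    using assms(7) unfolding proj_equivalent_def by blast
  obtain A2 where A2: "invertible A2" "projectivity_image A2 T = L2"
    using assms(8) unfolding proj_equivalent_def by blast
  note tr1 = transfer[OF A1(1) T_sec T_tan, unfolded A1(2)]
  note tr2 = transfer[OF A2(1) T_sec T_tan, unfolded A2(2)]
  have bl1: "L1 \<subseteq> pg_points" "\<forall>l\<in>pg_lines. 1 \<le> card (l \<inter> L1)"
    using assms(4) unfolding blocking_set_def t_fold_blocking_set_def by auto
  have bl2: "L2 \<subseteq> pg_points" "\<forall>l\<in>pg_lines. 1 \<le> card (l \<inter> L2)"
    using assms(5) unfolding blocking_set_def t_fold_blocking_set_def by auto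
  have c1: "card L1 \<le> CARD('a) + q ^ (h - 1) + 1" using tr1(1) T_card assms(3) by simp
  have c2: "card L2 \<le> CARD('a) + q ^ (h - 1) + 1" using tr2(1) T_card assms(3) by simp
  obtain j where j: "h = 2 + j" using le_Suc_ex[OF assms(2)] by blast
  have rs: "q ^ (h - 1) = q * q ^ (h - 2)" using j by simp
  have qpos: "q > 0" using q2 by simp
  have cnt: "\<forall>P\<in>L1 \<union> L2.
           card {l \<in> pg_lines. P \<in> l \<and> card (l \<inter> (L1 \<union> L2)) = 2}
             \<ge> q ^ h - q ^ (h - 1) - q ^ (h - 2)"
  proof
    fix P assume "P \<in> L1 \<union> L2"
    then show "card {l \<in> pg_lines. P \<in> l \<and> card (l \<inter> (L1 \<union> L2)) = 2}
             \<ge> q ^ h - q ^ (h - 1) - q ^ (h - 2)"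
    proof
      assume P: "P \<in> L1"
      show ?thesis
        using main_count[OF bl1(1) bl2(1) assms(6) bl1(2) bl2(2) tr2(2) c2 tr1(3) P qpos rs] assms(3)
        by simp
    next
      assume P: "P \<in> L2"
      have dis': "L2 \<inter> L1 = {}" using assms(6) by blast
      show ?thesis
        using main_count[OF bl2(1) bl1(1) dis' bl2(2) bl1(2) tr1(2) c1 tr2(3) P qpos rs] assms(3)
        by (simp add: Un_commute)
    qed
  qed
  have pos: "1 \<le> q ^ h - q ^ (h - 1) - q ^ (h - 2)"
  proof -
    define m where "m = q ^ (h - 2)"
    have m1: "m \<ge> 1" using qpos by (simp add: m_def)
    have e1: "q ^ h = q * q * m" using j unfolding m_def by (simp add: power_add power2_eq_square)
    have e2: "q ^ (h - 1) = q * m" using rs m_def by simp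
    have "q * q * m \<ge> 2 * q * m" using q2 by (simp add: mult_right_mono)
    moreover have "q * m \<ge> 2 * m" using q2 by (simp add: mult_right_mono)
    ultimately have "q * q * m \<ge> q * m + m + 1" using m1 by linarith
    moreover have "q ^ h - q ^ (h - 1) - q ^ (h - 2) = q * q * m - q * m - m" using e1 e2 m_def by simp
    ultimately show ?thesis by linarith
  qed
  have dbl: "double_blocking_set (L1 \<union> L2)"
    unfolding double_blocking_set_def t_fold_blocking_set_def
  proof (intro conjI ballI)
    show "L1 \<union> L2 \<subseteq> pg_points" using bl1 bl2 by blast
    fix l :: "('a^3) set set" assume l: "l \<in> pg_lines"
    have "card (l \<inter> (L1 \<union> L2)) = card ((l \<inter> L1) \<union> (l \<inter> L2))" by (simp add: Int_Un_distrib)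
    also have "\<dots> = card (l \<inter> L1) + card (l \<inter> L2)" by (rule card_Un_disjoint) (use assms(6) in auto)
    finally show "2 \<le> card (l \<inter> (L1 \<union> L2))" using bl1(2) bl2(2) l by fastforce
  qed
  have "\<forall>B'. B' \<subset> L1 \<union> L2 \<longrightarrow> \<not> double_blocking_set B'"
  proof (intro allI impI)
    fix B' assume B': "B' \<subset> L1 \<union> L2"
    then obtain P where P: "P \<in> L1 \<union> L2" "P \<notin> B'" by blast
    have "1 \<le> card {l \<in> pg_lines. P \<in> l \<and> card (l \<inter> (L1 \<union> L2)) = 2}"
    proof -
      have "q ^ h - q ^ (h - 1) - q ^ (h - 2) \<le> card {l \<in> pg_lines. P \<in> l \<and> card (l \<inter> (L1 \<union> L2)) = 2}"
        using cnt P(1) by blast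
      thus ?thesis using pos by linarith
    qed
    then have "{l \<in> pg_lines. P \<in> l \<and> card (l \<inter> (L1 \<union> L2)) = 2} \<noteq> {}"
      by (intro notI) simp
    then obtain l where l: "l \<in> pg_lines" "P \<in> l" "card (l \<inter> (L1 \<union> L2)) = 2"
      by blast
    have "l \<inter> B' \<subseteq> (l \<inter> (L1 \<union> L2)) - {P}" using B' P l by blast
    then have "card (l \<inter> B') \<le> card ((l \<inter> (L1 \<union> L2)) - {P})" by (rule card_mono[OF finite])
    also have "\<dots> = 1" using l P by (simp add: card_Diff_singleton)
    finally have "card (l \<inter> B') < 2" by simp
    then show "\<not> double_blocking_set B'"
      using l(1) unfolding double_blocking_set_def t_fold_blocking_set_def by fastforce
  qed
  then show ?thesis using cnt dbl unfolding minimal_double_blocking_set_def by blast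
qed

end
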